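(* In the option framework described in the context, let the terminations $\beta_o(s,\vartheta)$ be differentiable in $\vartheta$, write $\beta'_o(s',\vartheta)=1-\beta_o(s',\vartheta)+\pi_{\mathcal O}(s',o)\beta_o(s',\vartheta)$, and for a vector $\varphi$ define the compatible function approximator $h^{\beta_o}_\varphi(s')=\varphi^T\frac{\partial\ln\beta'_o(s',\vartheta)}{\partial\vartheta}$ and the squared error $$\epsilon(\varphi,\vartheta)=\sum_{s',o}\mu_{\mathcal O}(s',o)\,L_o(s';\vartheta)\,\big(h^{\beta_o}_\varphi(s')-a'_{\mathcal O}(s',o)\big)^2,\qquad L_o(s';\vartheta)=\frac{\beta'_o(s',\vartheta)}{1-\beta'_o(s',\vartheta)},$$ where it is assumed that $1-\beta'_o(s',\vartheta)\neq0$. Let $G_\vartheta=-\sum_{s',o}\mu_{\mathcal O}(s',o)\frac{\partial\ln\beta_o(s',\vartheta)}{\partial\vartheta}\big(\frac{\partial\ln\beta'_o(s',\vartheta)}{\partial\vartheta}\big)^T$ (assumed invertible). If $\tilde\varphi$ is a local minimum of $\epsilon(\cdot,\vartheta)$, then $$G_\vartheta^{-1}\frac{\partial u(o_0,s_1)}{\partial\vartheta}=-\tilde\varphi,$$ i.e. the natural gradient of the expected discounted return with respect to $\vartheta$ is $-\tilde\varphi$.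
   Context: Finite MDP with states $\mathcal S$, actions $\mathcal A$, transition function $P$, discount $\gamma$; finite option set $\mathcal O$ with intra-option policies $\pi_o(s,a)$, terminations $\beta_o(s,\vartheta)$ and a policy over options $\pi_{\mathcal O}(s,o)$; in state $s_t$ with option $o_t$ the agent draws $a_t\sim\pi_{o_t}(s_t,\cdot)$, moves to $s_{t+1}$, and $o_t$ terminates there with probability $\beta_{o_t}(s_{t+1},\vartheta)$, after which a new option is drawn from $\pi_{\mathcal O}(s_{t+1},\cdot)$ (so $\beta'_o(s',\vartheta)$ is the probability that $o$ is active when leaving $s'$ given $o$ was active on entering $s'$). Value functions (expected discounted returns): $v_{\pi_{\mathcal O}}(s)$ given $S_0=s$; $q_{\pi_{\mathcal O}}(s,o)$ given $S_0=s,O_0=o$; option-value upon arrival $u(o,s')$ given $O_0=o,S_1=s'$, satisfying $u(o,s')=(1-\beta_o(s'))q_{\pi_{\mathcal O}}(s',o)+\beta_o(s')v_{\pi_{\mathcal O}}(s')$. Advantages: $a_{\mathcal O}(s',o)=q_{\pi_{\mathcal O}}(s',o)-v_{\pi_{\mathcal O}}(s')$ and the advantage of continued option $a'_{\mathcal O}(s',o)=u(o,s')-q_{\pi_{\mathcal O}}(s',o)$. $\mu_{\mathcal O}(s',o)=\sum_{t\ge0}\gamma^t\Pr(S_{t+1}=s',O_t=o\mid s_1,o_0)$ is the discounted weighting of pairs from $(s_1,o_0)$ (treated as a stationary distribution). The gradient $\partial u(o_0,s_1)/\partial\vartheta$ is given by the termination gradient theorem: $\frac{\partial u(o_0,s_1)}{\partial\vartheta}=-\sum_{o,s'}\mu_{\mathcal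 O}(s',o)\frac{\partial\beta_o(s',\vartheta)}{\partial\vartheta}a_{\mathcal O}(s',o)$. *)

theory Defs
  imports "HOL-Analysis.Analysis"
begin

definition grad :: "('a::real_inner \<Rightarrow> real) \<Rightarrow> 'a \<Rightarrow> 'a" where
  "grad f x = (THE D. GDERIV f x :> D)"

definition outer :: "real ^ 'n \<Rightarrow> real ^ 'n \<Rightarrow> real ^ 'n ^ 'n" where
  "outer a b = (\<chi> i j. a $ i * b $ j)"

text \<open>beta'_o(s', theta) = 1 - beta_o(s',theta) + pi_O(s',w) beta_o(s',theta):
  probability that w is still active when leaving s'.\<close>
definition beta' :: "('o \<Rightarrow> 's \<Rightarrow> 'p \<Rightarrow> real) \<Rightarrow> ('s \<Rightarrow> 'o \<Rightarrow> real) \<Rightarrow> 'o \<Rightarrow> 's \<Rightarrow> 'p \<Rightarrow> real" where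
  "beta' \<beta> \<pi>O w s x = 1 - \<beta> w s x + \<pi>O s w * \<beta> w s x"

definition uval :: "('o \<Rightarrow> 's \<Rightarrow> 'p \<Rightarrow> real) \<Rightarrow> ('s \<Rightarrow> 'o \<Rightarrow> real) \<Rightarrow> ('s \<Rightarrow> real) \<Rightarrow> 'p \<Rightarrow> 'o \<Rightarrow> 's \<Rightarrow> real" where
  "uval \<beta> q v x w s = (1 - \<beta> w s x) * q s w + \<beta> w s x * v s"

definition adv :: "('s \<Rightarrow> 'o \<Rightarrow> real) \<Rightarrow> ('s \<Rightarrow> real) \<Rightarrow> 's \<Rightarrow> 'o \<Rightarrow> real" where
  "adv q v s w = q s w - v s"

definition adv' :: "('o \<Rightarrow> 's \<Rightarrow> 'p \<Rightarrow> real) \<Rightarrow> ('s \<Rightarrow> 'o \<Rightarrow> real) \<Rightarrow> ('s \<Rightarrow> real) \<Rightarrow> 'p \<Rightarrow> 's \<Rightarrow> 'o \<Rightarrow> real" where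
  "adv' \<beta> q v x s w = uval \<beta> q v x w s - q s w"

definition hcompat :: "('o \<Rightarrow> 's \<Rightarrow> real^'n \<Rightarrow> real) \<Rightarrow> ('s \<Rightarrow> 'o \<Rightarrow> real) \<Rightarrow> real^'n \<Rightarrow> real^'n \<Rightarrow> 'o \<Rightarrow> 's \<Rightarrow> real" where
  "hcompat \<beta> \<pi>O \<phi> x w s = \<phi> \<bullet> grad (\<lambda>y. ln (beta' \<beta> \<pi>O w s y)) x"

definition Lw :: "('o \<Rightarrow> 's \<Rightarrow> 'p \<Rightarrow> real) \<Rightarrow> ('s \<Rightarrow> 'o \<Rightarrow> real) \<Rightarrow> 'o \<Rightarrow> 's \<Rightarrow> 'p \<Rightarrow> real" where
  "Lw \<beta> \<pi>O w s x = beta' \<beta> \<pi>O w s x / (1 - beta' \<beta> \<pi>O w s x)"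

definition sqerr :: "('s::finite \<Rightarrow> 'o::finite \<Rightarrow> real) \<Rightarrow> ('o \<Rightarrow> 's \<Rightarrow> real^'n \<Rightarrow> real) \<Rightarrow> ('s \<Rightarrow> 'o \<Rightarrow> real)
    \<Rightarrow> ('s \<Rightarrow> 'o \<Rightarrow> real) \<Rightarrow> ('s \<Rightarrow> real) \<Rightarrow> real^'n \<Rightarrow> real^'n \<Rightarrow> real" where
  "sqerr \<mu> \<beta> \<pi>O q v \<phi> x =
     (\<Sum>s\<in>UNIV. \<Sum>w\<in>UNIV. \<mu> s w * Lw \<beta> \<pi>O w s x * (hcompat \<beta> \<pi>O \<phi> x w s - adv' \<beta> q v x s w)\<^sup>2)"

definition Gmat :: "('s::finite \<Rightarrow> 'o::finite \<Rightarrow> real) \<Rightarrow> ('o \<Rightarrow> 's \<Rightarrow> real^'n \<Rightarrow> real) \<Rightarrow> ('s \<Rightarrow> 'o \<Rightarrow> real)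
    \<Rightarrow> real^'n \<Rightarrow> real^'n^'n" where
  "Gmat \<mu> \<beta> \<pi>O x = - (\<Sum>s\<in>UNIV. \<Sum>w\<in>UNIV. \<mu> s w *\<^sub>R
      outer (grad (\<lambda>y. ln (\<beta> w s y)) x) (grad (\<lambda>y. ln (beta' \<beta> \<pi>O w s y)) x))"

end

theory Submission
  imports Defs
begin

lemma grad_eq:
  fixes f :: "'a::real_inner \<Rightarrow> real"
  assumes "GDERIV f x :> D" shows "grad f x = D"
  unfolding grad_def
proof (rule the_equality)
  show "GDERIV f x :> D" by fact
  fix D' assume "GDERIV f x :> D'"
  then have "(\<lambda>h. h \<bullet> D') = (\<lambda>h. h \<bullet> D)"
    using assms unfolding gderiv_def by (metis has_derivative_unique)
  then have "(D' - D) \<bullet> D' = (D' - D) \<bullet> D" by metis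
  then have "(D' - D) \<bullet> (D' - D) = 0" by (simp add: inner_diff_right)
  then show "D' = D" by simp
qed

lemma gderiv_exists:
  fixes f :: "'a::euclidean_space \<Rightarrow> real"
  assumes "f differentiable (at x)" shows "\<exists>D. GDERIV f x :> D"
proof -
  obtain f' where f': "(f has_derivative f') (at x)" using assms differentiable_def by blast
  then have lin: "linear f'" using has_derivative_linear by blast
  define D where "D = (\<Sum>i\<in>Basis. f' i *\<^sub>R i)"
  have "f' h = h \<bullet> D" for h
  proof -
    have "f' h = f' (\<Sum>i\<in>Basis. (h \<bullet> i) *\<^sub>R i)" by (simp add: euclidean_representation)
    also have "\<dots> = (\<Sum>i\<in>Basis. (h \<bullet> i) * f' i)" using lin by (simp add: linear_sum linear_scale)
    also have "\<dots> = h \<bullet> D" unfolding D_def by (simp add: inner_sum_right mult.commute)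
    finally show ?thesis .
  qed
  then have "f' = (\<lambda>h. h \<bullet> D)" by auto
  then show ?thesis using f' unfolding gderiv_def by blast
qed

lemma GDERIV_cmult:
  fixes f :: "'a::real_inner \<Rightarrow> real"
  assumes "GDERIV f x :> D" shows "GDERIV (\<lambda>y. c * f y) x :> c *\<^sub>R D"
  using has_derivative_mult_right[OF assms[unfolded gderiv_def], of c] unfolding gderiv_def
  by simp

lemma outer_sum_mv:
  fixes a b :: "'k \<Rightarrow> real^'n"
  shows "(\<Sum>k\<in>K. c k *\<^sub>R outer (a k) (b k)) *v x = (\<Sum>k\<in>K. (c k * (b k \<bullet> x)) *\<^sub>R a k)"
  unfolding vec_eq_iff
  by (simp add: matrix_vector_mult_def outer_def sum_component inner_vec_def sum_distrib_left sum_distrib_right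
      sum.swap[of _ K] algebra_simps)

theorem mainTheorem6:
  fixes \<beta> :: "'o::finite \<Rightarrow> 's::finite \<Rightarrow> real^'n \<Rightarrow> real"
    and \<pi>O :: "'s \<Rightarrow> 'o \<Rightarrow> real"
    and \<mu> :: "'s \<Rightarrow> 'o \<Rightarrow> real"
    and q :: "'s \<Rightarrow> 'o \<Rightarrow> real" and v :: "'s \<Rightarrow> real"
    and U :: "real^'n \<Rightarrow> real"
    and \<theta> \<phi> :: "real^'n"
  assumes beta_prob: "\<And>w s y. 0 \<le> \<beta> w s y \<and> \<beta> w s y \<le> 1"
    and beta_diff: "\<And>w s y. \<beta> w s differentiable (at y)"
    and piO_prob: "\<And>s w. 0 \<le> \<pi>O s w" "\<And>s. (\<Sum>w\<in>UNIV. \<pi>O s w) = 1"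
    and mu_nonneg: "\<And>s w. 0 \<le> \<mu> s w"
    and beta'_pos: "\<And>w s. 0 < beta' \<beta> \<pi>O w s \<theta>"
    and beta'_ne1: "\<And>w s. 1 - beta' \<beta> \<pi>O w s \<theta> \<noteq> 0"
    and term_grad: "GDERIV U \<theta> :> - (\<Sum>s\<in>UNIV. \<Sum>w\<in>UNIV. (\<mu> s w * adv q v s w) *\<^sub>R grad (\<beta> w s) \<theta>)"
    and G_inv: "invertible (Gmat \<mu> \<beta> \<pi>O \<theta>)"
    and locmin: "\<exists>e>0. \<forall>\<psi>. dist \<psi> \<phi> < e \<longrightarrow> sqerr \<mu> \<beta> \<pi>O q v \<phi> \<theta> \<le> sqerr \<mu> \<beta> \<pi>O q v \<psi> \<theta>"
  shows "matrix_inv (Gmat \<mu> \<beta> \<pi>O \<theta>) *v grad U \<theta> = - \<phi>"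
proof -
  have "\<forall>w s. \<exists>D. GDERIV (\<beta> w s) \<theta> :> D" using gderiv_exists beta_diff by blast
  then obtain Db where Db: "\<And>w s. GDERIV (\<beta> w s) \<theta> :> Db w s" by metis
  define b where "b w s = \<beta> w s \<theta>" for w s
  define p where "p s w = \<pi>O s w" for s w
  define bp where "bp w s = beta' \<beta> \<pi>O w s \<theta>" for w s
  have bp_eq: "bp w s = 1 - (1 - p s w) * b w s" for w s
    unfolding bp_def beta'_def b_def p_def by (simp add: algebra_simps)
  have nz: "(1 - p s w) * b w s \<noteq> 0" for w s
    using beta'_ne1[of w s] bp_eq[of w s] unfolding bp_def by simp
  have bpos: "b w s > 0" for w s
    using nz[of s w] beta_prob[of w s \<theta>] unfolding b_def by (metis less_eq_real_def mult_zero_right)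
  have bppos: "bp w s > 0" for w s using beta'_pos unfolding bp_def by simp
  have gb: "grad (\<beta> w s) \<theta> = Db w s" for w s using grad_eq Db by blast
  define g where "g w s = inverse (bp w s) *\<^sub>R ((p s w - 1) *\<^sub>R Db w s)" for w s
  define gl where "gl w s = inverse (b w s) *\<^sub>R Db w s" for w s
  have gg: "grad (\<lambda>y. ln (beta' \<beta> \<pi>O w s y)) \<theta> = g w s" for w s
  proof (rule grad_eq)
    have fe: "(\<lambda>y. beta' \<beta> \<pi>O w s y) = (\<lambda>y. 1 - (1 - p s w) * \<beta> w s y)"
      unfolding beta'_def p_def by (auto simp: algebra_simps)
    have "GDERIV (\<lambda>y. beta' \<beta> \<pi>O w s y) \<theta> :> (p s w - 1) *\<^sub>R Db w s"
      unfolding fe using GDERIV_diff[OF GDERIV_const GDERIV_cmult[OF Db], of 1 "1 - p s w" w s]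
      by (simp add: algebra_simps)
    from GDERIV_DERIV_compose[OF this DERIV_ln[OF bppos[of w s, unfolded bp_def]]]
    show "GDERIV (\<lambda>y. ln (beta' \<beta> \<pi>O w s y)) \<theta> :> g w s" unfolding g_def bp_def .
  qed
  have ggl: "grad (\<lambda>y. ln (\<beta> w s y)) \<theta> = gl w s" for w s
  proof (rule grad_eq)
    from GDERIV_DERIV_compose[OF Db DERIV_ln[OF bpos[of w s, unfolded b_def]]]
    show "GDERIV (\<lambda>y. ln (\<beta> w s y)) \<theta> :> gl w s" unfolding gl_def b_def .
  qed
  define c where "c s w = \<mu> s w * Lw \<beta> \<pi>O w s \<theta>" for s w
  define a where "a s w = adv' \<beta> q v \<theta> s w" for s w
  have a_eq: "a s w = - b w s * adv q v s w" for s w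
    unfolding a_def adv'_def uval_def adv_def b_def by (simp add: algebra_simps)
  have sq: "sqerr \<mu> \<beta> \<pi>O q v \<psi> \<theta> = (\<Sum>s\<in>UNIV. \<Sum>w\<in>UNIV. c s w * (\<psi> \<bullet> g w s - a s w)\<^sup>2)" for \<psi>
    unfolding sqerr_def c_def a_def hcompat_def gg ..
  define V where "V = (\<Sum>s\<in>UNIV. \<Sum>w\<in>UNIV. (c s w * (\<phi> \<bullet> g w s - a s w)) *\<^sub>R g w s)"
  have V0: "V = 0"
  proof -
    define F where "F t = sqerr \<mu> \<beta> \<pi>O q v (\<phi> + t *\<^sub>R V) \<theta>" for t
    have Fe: "F = (\<lambda>t. \<Sum>s\<in>UNIV. \<Sum>w\<in>UNIV. c s w * ((\<phi> \<bullet> g w s - a s w) + t * (V \<bullet> g w s))\<^sup>2)"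
      unfolding F_def sq by (simp add: inner_add_left algebra_simps)
    have "DERIV F 0 :> (\<Sum>s\<in>UNIV. \<Sum>w\<in>UNIV. c s w * (2 * (\<phi> \<bullet> g w s - a s w) * (V \<bullet> g w s)))"
      unfolding Fe by (auto intro!: derivative_eq_intros sum.cong simp: algebra_simps)
    moreover have "(\<Sum>s\<in>UNIV. \<Sum>w\<in>UNIV. c s w * (2 * (\<phi> \<bullet> g w s - a s w) * (V \<bullet> g w s))) = 2 * (V \<bullet> V)"
      unfolding V_def inner_sum_right inner_sum_left sum_distrib_left
      by (rule sum.cong[OF refl], rule sum.cong[OF refl]) (simp add: algebra_simps)
    moreover obtain e where e: "e > 0" "\<forall>\<psi>. dist \<psi> \<phi> < e \<longrightarrow> sqerr \<mu> \<beta> \<pi>O q v \<phi> \<theta> \<le> sqerr \<mu> \<beta> \<pi>O q v \<psi> \<theta>"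
      using locmin by blast
    define d where "d = e / (norm V + 1)"
    have dpos: "d > 0" using e(1) unfolding d_def by (simp add: add_nonneg_pos)
    have "\<forall>y. \<bar>0 - y\<bar> < d \<longrightarrow> F 0 \<le> F y"
    proof (intro allI impI)
      fix y assume "\<bar>0 - y\<bar> < d"
      then have "\<bar>y\<bar> * (norm V + 1) < e" unfolding d_def
        by (simp add: pos_less_divide_eq add_nonneg_pos)
      moreover have "\<bar>y\<bar> * norm V \<le> \<bar>y\<bar> * (norm V + 1)" by (simp add: mult_left_mono)
      ultimately have "dist (\<phi> + y *\<^sub>R V) \<phi> < e" by (simp add: dist_norm)
      then show "F 0 \<le> F y" using e(2) unfolding F_def by simp
    qed
    ultimately have "2 * (V \<bullet> V) = 0" using DERIV_local_min[OF _ dpos] by metis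
    then show ?thesis by simp
  qed
  have term_eq: "(c s w * (\<phi> \<bullet> g w s - a s w)) *\<^sub>R g w s
      = - ((\<mu> s w * (g w s \<bullet> \<phi>)) *\<^sub>R gl w s) - (\<mu> s w * adv q v s w) *\<^sub>R Db w s" for s w
  proof -
    have cg: "c s w * inverse (bp w s) * (p s w - 1) = - \<mu> s w * inverse (b w s)"
    proof -
      have e1: "1 - bp w s = (1 - p s w) * b w s" using bp_eq[of w s] by simp
      have "c s w * inverse (bp w s) * (p s w - 1) = \<mu> s w * (p s w - 1) / (1 - bp w s)"
        using bppos[of w s] unfolding c_def Lw_def bp_def[symmetric] by (simp add: field_simps)
      also have "\<dots> = \<mu> s w * (p s w - 1) / ((1 - p s w) * b w s)" unfolding e1 ..
      also have "\<dots> = - \<mu> s w * inverse (b w s)" using nz[of s w]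
        by (simp add: field_simps)
      finally show ?thesis .
    qed
    have "(c s w * (\<phi> \<bullet> g w s - a s w)) *\<^sub>R g w s
       = ((c s w * inverse (bp w s) * (p s w - 1)) * (\<phi> \<bullet> g w s - a s w)) *\<^sub>R Db w s"
      unfolding g_def inner_scaleR_right scaleR_scaleR
      by (rule arg_cong[where f="\<lambda>x. x *\<^sub>R Db w s"]) (simp add: algebra_simps)
    also have "\<dots> = (- \<mu> s w * inverse (b w s) * (\<phi> \<bullet> g w s) - \<mu> s w * adv q v s w) *\<^sub>R Db w s"
      unfolding cg a_eq using bpos[of w s]
      by (intro arg_cong[where f="\<lambda>x. x *\<^sub>R Db w s"]) (simp add: field_simps)
    also have "\<dots> = - ((\<mu> s w * (g w s \<bullet> \<phi>)) *\<^sub>R gl w s) - (\<mu> s w * adv q v s w) *\<^sub>R Db w s"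
      unfolding gl_def by (simp add: algebra_simps inner_commute)
    finally show ?thesis .
  qed
  have Gphi: "Gmat \<mu> \<beta> \<pi>O \<theta> *v \<phi> = - (\<Sum>s\<in>UNIV. \<Sum>w\<in>UNIV. (\<mu> s w * (g w s \<bullet> \<phi>)) *\<^sub>R gl w s)"
  proof -
    have "Gmat \<mu> \<beta> \<pi>O \<theta> = - (\<Sum>s\<in>UNIV. \<Sum>w\<in>UNIV. \<mu> s w *\<^sub>R outer (gl w s) (g w s))"
      unfolding Gmat_def gg ggl ..
    also have "\<dots> = - (\<Sum>(s,w)\<in>UNIV. \<mu> s w *\<^sub>R outer (gl w s) (g w s))"
      by (simp add: sum.cartesian_product UNIV_Times_UNIV[symmetric] del: UNIV_Times_UNIV)
    finally have "Gmat \<mu> \<beta> \<pi>O \<theta> *v \<phi> = - ((\<Sum>(s,w)\<in>UNIV. \<mu> s w *\<^sub>R outer (gl w s) (g w s)) *v \<phi>)"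
      by (simp add: matrix_vector_mult_def vec_eq_iff sum_negf)
    also have "\<dots> = - (\<Sum>(s,w)\<in>UNIV. (\<mu> s w * (g w s \<bullet> \<phi>)) *\<^sub>R gl w s)"
      using outer_sum_mv[of "\<lambda>(s,w). \<mu> s w" "\<lambda>(s,w). gl w s" "\<lambda>(s,w). g w s" UNIV \<phi>]
      by (simp add: case_prod_beta')
    also have "\<dots> = - (\<Sum>s\<in>UNIV. \<Sum>w\<in>UNIV. (\<mu> s w * (g w s \<bullet> \<phi>)) *\<^sub>R gl w s)"
      by (simp add: sum.cartesian_product UNIV_Times_UNIV[symmetric] del: UNIV_Times_UNIV)
    finally show ?thesis .
  qed
  have gU: "grad U \<theta> = - (\<Sum>s\<in>UNIV. \<Sum>w\<in>UNIV. (\<mu> s w * adv q v s w) *\<^sub>R Db w s)"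
    using grad_eq[OF term_grad] unfolding gb .
  have "0 = V" using V0 by simp
  also have "V = - (\<Sum>s\<in>UNIV. \<Sum>w\<in>UNIV. (\<mu> s w * (g w s \<bullet> \<phi>)) *\<^sub>R gl w s)
       - (\<Sum>s\<in>UNIV. \<Sum>w\<in>UNIV. (\<mu> s w * adv q v s w) *\<^sub>R Db w s)"
    unfolding V_def term_eq by (simp add: sum_subtractf sum_negf)
  finally have Z: "0 = - (\<Sum>s\<in>UNIV. \<Sum>w\<in>UNIV. (\<mu> s w * (g w s \<bullet> \<phi>)) *\<^sub>R gl w s)
       - (\<Sum>s\<in>UNIV. \<Sum>w\<in>UNIV. (\<mu> s w * adv q v s w) *\<^sub>R Db w s)" .
  have GU: "Gmat \<mu> \<beta> \<pi>O \<theta> *v \<phi> = - grad U \<theta>"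
    unfolding Gphi gU using Z by (simp add: eq_diff_eq)
  have inv: "matrix_inv (Gmat \<mu> \<beta> \<pi>O \<theta>) ** Gmat \<mu> \<beta> \<pi>O \<theta> = mat 1"
    using G_inv unfolding invertible_def matrix_inv_def by (metis (mono_tags, lifting) someI_ex)
  have "grad U \<theta> = Gmat \<mu> \<beta> \<pi>O \<theta> *v (- \<phi>)" using GU linear_neg[OF matrix_vector_mul_linear, of "Gmat \<mu> \<beta> \<pi>O \<theta>" \<phi>] by simp
  then show ?thesis by (simp add: matrix_vector_mul_assoc inv)
qed

end
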